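(* Let $\xi_1,\xi_2,\dots$ be i.i.d. integer-valued random variables with $\mathbb E\xi_1<0$, and suppose $\mathbb E e^{\beta\xi_1}=1$ for some $\beta>0$. Let $\xi^{(\beta)}_1,\xi^{(\beta)}_2,\dots$ be i.i.d. with $\mathbb P\{\xi^{(\beta)}_k=j\}=e^{\beta j}\mathbb P\{\xi_1=j\}$, $j\in\mathbb Z$, and $S^{(\beta)}_0=0$, $S^{(\beta)}_n=\sum_{k=1}^n\xi^{(\beta)}_k$. Define $$f(i):=e^{\beta i}\,\mathbb P\Big\{\min_{n\ge0}S^{(\beta)}_n\ge -i\Big\},\qquad i\in\mathbb Z_+.$$ Then $f$ is harmonic for the random walk killed at leaving $\mathbb Z_+$, i.e. $f(i)=\sum_{j=0}^\infty\mathbb P\{\xi_1=j-i\}f(j)$ for all $i\ge0$; moreover $e^{\beta i}-e^{-\beta}\le f(i)\le e^{\beta i}$ for all $i\ge0$; and $f(i)=\mathbb P\{\tau^{(\beta)}_1=\infty\}\sum_{j=0}^ie^{\beta(i-j)}u(j)$, where $u(j)$ is the renewal mass function of the strict descending ladder heights of $S_n=\sum_{k=1}^n\xi_k$ (i.e. $u(l)=\sum_{k\ge0}\mathbb P\{\chi_1+\dots+\chi_k=l,\ \tau_1<\infty,\dots,\tau_k<\infty\}$ with $(\tau_k,\chi_k)$ the strict descending ladder epochs and heights, heights taken positive) and $\tau^{(\beta)}_1$ is the first strict descending ladder epoch of $S^{(\beta)}_n$. *)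

theory Defs
  imports "HOL-Probability.Probability"
begin

definition walk :: "int stream \<Rightarrow> nat \<Rightarrow> int" where
  "walk \<omega> n = sum_list (stake n \<omega>)"

abbreviation iid_law :: "int pmf \<Rightarrow> int stream measure" where
  "iid_law p \<equiv> stream_space (measure_pmf p)"

fun ladder_epoch :: "int stream \<Rightarrow> nat \<Rightarrow> enat" where
  "ladder_epoch \<omega> 0 = 0"
| "ladder_epoch \<omega> (Suc k) =
     (case ladder_epoch \<omega> k of
        \<infinity> \<Rightarrow> \<infinity>
      | enat t \<Rightarrow> (if \<exists>n>t. walk \<omega> n < walk \<omega> t
                   then enat (LEAST n. t < n \<and> walk \<omega> n < walk \<omega> t) else \<infinity>))"

text \<open>Strict descending ladder heights (taken positive): chi_k = S_(tau_(k-1)) - S_(tau_k), k \<ge> 1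
  (only meaningful when tau_k is finite).\<close>
definition ladder_height :: "int stream \<Rightarrow> nat \<Rightarrow> int" where
  "ladder_height \<omega> k =
     walk \<omega> (the_enat (ladder_epoch \<omega> (k - 1))) - walk \<omega> (the_enat (ladder_epoch \<omega> k))"

definition renewal_u :: "int pmf \<Rightarrow> nat \<Rightarrow> ennreal" where
  "renewal_u p l = (\<Sum>k. emeasure (iid_law p)
      {\<omega>. (\<forall>m\<in>{1..k}. ladder_epoch \<omega> m \<noteq> \<infinity>) \<and> (\<Sum>m\<in>{1..k}. ladder_height \<omega> m) = int l})"

text \<open>f(i) = e^(beta i) P{min_(n\<ge>0) S^(beta)_n \<ge> -i}, where q is the law of the tilted step.\<close>
definition harm_f :: "int pmf \<Rightarrow> real \<Rightarrow> nat \<Rightarrow> real" where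
  "harm_f q \<beta> i = exp (\<beta> * real i) *
      measure (iid_law q) {\<omega>. \<forall>n. walk \<omega> n \<ge> - int i}"

end

theory Submission
  imports Defs
begin


lemma space_iid[simp]: "space (iid_law p) = UNIV"
  by (simp add: space_stream_space)

lemma sets_iid: "sets (iid_law p) = sets (stream_space (count_space UNIV))"
  by (rule sets_stream_space_cong) simp

lemma stake_meas: "stake n \<in> measurable (iid_law p) (count_space UNIV)"
  using measurable_stake by (subst measurable_cong_sets[OF sets_iid refl]) 

lemma comp_stake_meas: "(\<lambda>\<omega>. G (stake n \<omega>)) \<in> borel_measurable (iid_law p)"
  by (rule measurable_compose[OF stake_meas]) simp

lemma sdrop_meas: "H \<in> borel_measurable (iid_law p) \<Longrightarrow> (\<lambda>\<omega>. H (sdrop n \<omega>)) \<in> borel_measurable (iid_law p)"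
  by (rule measurable_compose[OF measurable_sdrop])

lemma prob_iid: "prob_space (iid_law p)"
  by (rule prob_space.prob_space_stream_space) (rule prob_space_measure_pmf)

lemma emeasure_iid_UNIV[simp]: "emeasure (iid_law p) UNIV = 1"
  using prob_space.emeasure_space_1[OF prob_iid, of p] by simp

lemma step_int:
  "(\<integral>\<^sup>+\<omega>. G (stake (Suc n) \<omega>) \<partial>iid_law p) = (\<integral>\<^sup>+x. (\<integral>\<^sup>+\<omega>. G (x # stake n \<omega>) \<partial>iid_law p) \<partial>measure_pmf p)"
proof -
  have m: "(\<lambda>\<omega>. G (stake (Suc n) \<omega>)) \<in> borel_measurable (iid_law p)"
    by (rule comp_stake_meas)
  have e: "\<And>x X. stake (Suc n) (x ## X) = x # stake n X" by simp
  show ?thesis using prob_space.nn_integral_stream_space[OF prob_space_measure_pmf m] by (simp only: e)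
qed

lemma local_set:
  assumes "\<And>\<omega> \<omega>'. stake n \<omega> = stake n \<omega>' \<Longrightarrow> \<omega> \<in> A \<Longrightarrow> \<omega>' \<in> A"
  shows "indicator A \<omega> = indicator (stake n ` A) (stake n \<omega>)"
proof -
  have "\<omega> \<in> A \<longleftrightarrow> stake n \<omega> \<in> stake n ` A"
  proof
    assume "stake n \<omega> \<in> stake n ` A"
    then obtain \<omega>' where "\<omega>' \<in> A" "stake n \<omega> = stake n \<omega>'" by blast
    then show "\<omega> \<in> A" using assms[of \<omega>' \<omega>] by simp
  qed simp
  then show ?thesis unfolding indicator_def by simp
qed

lemma local_set_meas:
  assumes "\<And>\<omega> \<omega>'. stake n \<omega> = stake n \<omega>' \<Longrightarrow> \<omega> \<in> A \<Longrightarrow> \<omega>' \<in> A"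
  shows "A \<in> sets (iid_law p)"
proof -
  have "A = stake n -` (stake n ` A) \<inter> space (iid_law p)"
  proof (intro set_eqI iffI)
    fix x assume "x \<in> stake n -` (stake n ` A) \<inter> space (iid_law p)"
    then obtain \<omega>' where "\<omega>' \<in> A" "stake n x = stake n \<omega>'" by blast
    then show "x \<in> A" using assms[of \<omega>' x] by simp
  qed simp
  also have "\<dots> \<in> sets (iid_law p)"
    by (rule measurable_sets[OF stake_meas]) simp
  finally show ?thesis .
qed

lemma pmf_tilt_int:
  assumes tilt: "\<And>j. pmf q j = exp (\<beta> * real_of_int j) * pmf p j"
  shows "(\<integral>\<^sup>+x. h x \<partial>measure_pmf q) = (\<integral>\<^sup>+x. ennreal (exp (\<beta> * real_of_int x)) * h x \<partial>measure_pmf p)"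
  by (simp add: nn_integral_measure_pmf tilt ennreal_mult mult.assoc mult.left_commute)

lemma tilt_int:
  assumes tilt: "\<And>j. pmf q j = exp (\<beta> * real_of_int j) * pmf p j"
  shows "(\<integral>\<^sup>+\<omega>. G (stake n \<omega>) \<partial>iid_law q) =
         (\<integral>\<^sup>+\<omega>. ennreal (exp (\<beta> * real_of_int (sum_list (stake n \<omega>)))) * G (stake n \<omega>) \<partial>iid_law p)"
proof (induction n arbitrary: G)
  case 0
  then show ?case by simp
next
  case (Suc n)
  have "(\<integral>\<^sup>+\<omega>. G (stake (Suc n) \<omega>) \<partial>iid_law q)
     = (\<integral>\<^sup>+x. (\<integral>\<^sup>+\<omega>. G (x # stake n \<omega>) \<partial>iid_law q) \<partial>measure_pmf q)"
    by (rule step_int)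
  also have "\<dots> = (\<integral>\<^sup>+x. (\<integral>\<^sup>+\<omega>. ennreal (exp (\<beta> * real_of_int (sum_list (stake n \<omega>)))) * G (x # stake n \<omega>) \<partial>iid_law p) \<partial>measure_pmf q)"
    using Suc.IH[of "\<lambda>xs. G (_ # xs)"] by simp
  also have "\<dots> = (\<integral>\<^sup>+x. ennreal (exp (\<beta> * real_of_int x)) * (\<integral>\<^sup>+\<omega>. ennreal (exp (\<beta> * real_of_int (sum_list (stake n \<omega>)))) * G (x # stake n \<omega>) \<partial>iid_law p) \<partial>measure_pmf p)"
    by (rule pmf_tilt_int[OF tilt])
  also have "\<dots> = (\<integral>\<^sup>+x. (\<integral>\<^sup>+\<omega>. ennreal (exp (\<beta> * real_of_int (sum_list (x # stake n \<omega>)))) * G (x # stake n \<omega>) \<partial>iid_law p) \<partial>measure_pmf p)"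
  proof (rule nn_integral_cong)
    fix x
    have m: "(\<lambda>\<omega>. ennreal (exp (\<beta> * real_of_int (sum_list (stake n \<omega>)))) * G (x # stake n \<omega>)) \<in> borel_measurable (iid_law p)"
      by (rule comp_stake_meas[where G="\<lambda>xs. ennreal (exp (\<beta> * real_of_int (sum_list xs))) * G (x # xs)"])
    show "ennreal (exp (\<beta> * real_of_int x)) * (\<integral>\<^sup>+\<omega>. ennreal (exp (\<beta> * real_of_int (sum_list (stake n \<omega>)))) * G (x # stake n \<omega>) \<partial>iid_law p) = (\<integral>\<^sup>+\<omega>. ennreal (exp (\<beta> * real_of_int (sum_list (x # stake n \<omega>)))) * G (x # stake n \<omega>) \<partial>iid_law p)"
      by (subst nn_integral_cmult[OF m, symmetric])
         (simp add: distrib_left exp_add ennreal_mult mult.assoc)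
  qed
  also have "\<dots> = (\<integral>\<^sup>+\<omega>. ennreal (exp (\<beta> * real_of_int (sum_list (stake (Suc n) \<omega>)))) * G (stake (Suc n) \<omega>) \<partial>iid_law p)"
    by (rule step_int[where G="\<lambda>xs. ennreal (exp (\<beta> * real_of_int (sum_list xs))) * G xs", symmetric])
  finally show ?case .
qed

lemma indep_int:
  assumes H: "H \<in> borel_measurable (iid_law p)"
  shows "(\<integral>\<^sup>+\<omega>. G (stake n \<omega>) * H (sdrop n \<omega>) \<partial>iid_law p) =
         (\<integral>\<^sup>+\<omega>. G (stake n \<omega>) \<partial>iid_law p) * (\<integral>\<^sup>+\<omega>. H \<omega> \<partial>iid_law p)"
proof (induction n arbitrary: G)
  case 0
  then show ?case
    by (simp add: nn_integral_cmult H mult.commute)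
next
  case (Suc n)
  have "(\<integral>\<^sup>+\<omega>. G (stake (Suc n) \<omega>) * H (sdrop (Suc n) \<omega>) \<partial>iid_law p)
      = (\<integral>\<^sup>+x. (\<integral>\<^sup>+\<omega>. G (x # stake n \<omega>) * H (sdrop n \<omega>) \<partial>iid_law p) \<partial>measure_pmf p)"
  proof -
    have m: "(\<lambda>\<omega>. G (stake (Suc n) \<omega>) * H (sdrop (Suc n) \<omega>)) \<in> borel_measurable (iid_law p)"
      by (intro borel_measurable_times_ennreal comp_stake_meas sdrop_meas H)
    show ?thesis using prob_space.nn_integral_stream_space[OF prob_space_measure_pmf m] by simp
  qed
  also have "\<dots> = (\<integral>\<^sup>+x. (\<integral>\<^sup>+\<omega>. G (x # stake n \<omega>) \<partial>iid_law p) * (\<integral>\<^sup>+\<omega>. H \<omega> \<partial>iid_law p) \<partial>measure_pmf p)"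
    using Suc.IH[of "\<lambda>xs. G (_ # xs)"] by simp
  also have "\<dots> = (\<integral>\<^sup>+x. (\<integral>\<^sup>+\<omega>. G (x # stake n \<omega>) \<partial>iid_law p) \<partial>measure_pmf p) * (\<integral>\<^sup>+\<omega>. H \<omega> \<partial>iid_law p)"
    by (rule nn_integral_multc) simp
  also have "\<dots> = (\<integral>\<^sup>+\<omega>. G (stake (Suc n) \<omega>) \<partial>iid_law p) * (\<integral>\<^sup>+\<omega>. H \<omega> \<partial>iid_law p)"
    by (simp only: step_int)
  finally show ?case .
qed

lemma walk_0[simp]: "walk \<omega> 0 = 0"
  by (simp add: walk_def)

lemma walk_Suc: "walk \<omega> (Suc n) = walk \<omega> n + \<omega> !! n"
  unfolding walk_def stake_Suc by simp

lemma walk_Cons: "walk (x ## \<omega>) (Suc n) = x + walk \<omega> n"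
  by (simp add: walk_def)

lemma walk_take: "m \<le> t \<Longrightarrow> walk \<omega> m = sum_list (take m (stake t \<omega>))"
  by (simp add: walk_def take_stake min_def)

lemma walk_stake_eq: "stake t \<omega> = stake t \<omega>' \<Longrightarrow> m \<le> t \<Longrightarrow> walk \<omega> m = walk \<omega>' m"
  using walk_take[of m t \<omega>] walk_take[of m t \<omega>'] by simp

lemma walk_shift: "walk \<omega> (t + m) = walk \<omega> t + walk (sdrop t \<omega>) m"
  by (simp only: walk_def stake_add[symmetric] sum_list_append)

lemma le_inf_mono:
  assumes "ladder_epoch \<omega> k = \<infinity>" "k \<le> m" shows "ladder_epoch \<omega> m = \<infinity>"
  using assms(2) by (induction m rule: dec_induct) (auto simp: assms(1))

lemma le_Suc_enat:
  "ladder_epoch \<omega> (Suc k) = enat t \<longleftrightarrow>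
   (\<exists>s. ladder_epoch \<omega> k = enat s \<and> s < t \<and> walk \<omega> t < walk \<omega> s \<and> (\<forall>n. s < n \<and> n < t \<longrightarrow> walk \<omega> s \<le> walk \<omega> n))"
proof (cases "ladder_epoch \<omega> k")
  case (enat s)
  show ?thesis
  proof (cases "\<exists>n>s. walk \<omega> n < walk \<omega> s")
    case True
    let ?L = "LEAST n. s < n \<and> walk \<omega> n < walk \<omega> s"
    have L: "s < ?L \<and> walk \<omega> ?L < walk \<omega> s" using LeastI_ex[OF True] by simp
    have Lm: "\<And>n. n < ?L \<Longrightarrow> \<not> (s < n \<and> walk \<omega> n < walk \<omega> s)"
      by (rule not_less_Least)
    show ?thesis
    proof
      assume "ladder_epoch \<omega> (Suc k) = enat t"
      then have "t = ?L" using enat True by simp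
      then show "\<exists>s. ladder_epoch \<omega> k = enat s \<and> s < t \<and> walk \<omega> t < walk \<omega> s \<and> (\<forall>n. s < n \<and> n < t \<longrightarrow> walk \<omega> s \<le> walk \<omega> n)"
        using L Lm enat by (intro exI[of _ s]) force
    next
      assume "\<exists>s'. ladder_epoch \<omega> k = enat s' \<and> s' < t \<and> walk \<omega> t < walk \<omega> s' \<and> (\<forall>n. s' < n \<and> n < t \<longrightarrow> walk \<omega> s' \<le> walk \<omega> n)"
      then have t: "s < t" "walk \<omega> t < walk \<omega> s" "\<forall>n. s < n \<and> n < t \<longrightarrow> walk \<omega> s \<le> walk \<omega> n"
        using enat by auto
      have "?L = t"
        by (rule Least_equality) (use t in force)+
      then show "ladder_epoch \<omega> (Suc k) = enat t" using enat True by simp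
    qed
  next
    case False
    then show ?thesis using enat by auto
  qed
qed simp

lemma le_inf_Suc:
  assumes "ladder_epoch \<omega> k = enat s"
  shows "ladder_epoch \<omega> (Suc k) = \<infinity> \<longleftrightarrow> (\<forall>n>s. walk \<omega> s \<le> walk \<omega> n)"
  using assms by simp (meson not_le)

lemma le_walk_le: "ladder_epoch \<omega> k = enat t \<Longrightarrow> walk \<omega> t \<le> - int k"
proof (induction k arbitrary: t)
  case 0
  then show ?case by (simp add: zero_enat_def)
next
  case (Suc k)
  then obtain s where "ladder_epoch \<omega> k = enat s" "walk \<omega> t < walk \<omega> s"
    using le_Suc_enat by blast
  with Suc.IH[of s] show ?case by simp
qed

lemma le_min: "ladder_epoch \<omega> k = enat t \<Longrightarrow> n \<le> t \<Longrightarrow> walk \<omega> t \<le> walk \<omega> n"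
proof (induction k arbitrary: t n)
  case 0
  then show ?case by (simp add: zero_enat_def)
next
  case (Suc k)
  then obtain s where s: "ladder_epoch \<omega> k = enat s" "s < t" "walk \<omega> t < walk \<omega> s"
    "\<forall>n. s < n \<and> n < t \<longrightarrow> walk \<omega> s \<le> walk \<omega> n"
    using le_Suc_enat by blast
  show ?case
  proof (cases "n \<le> s")
    case True
    with Suc.IH[OF s(1) True] s(3) show ?thesis by simp
  next
    case False
    show ?thesis
    proof (cases "n = t")
      case False
      then have "walk \<omega> s \<le> walk \<omega> n" using s(4) \<open>\<not> n \<le> s\<close> Suc.prems(2) by simp
      then show ?thesis using s(3) by simp
    qed simp
  qed
qed

lemma le_local:
  assumes "\<And>n. n \<le> t \<Longrightarrow> walk \<omega> n = walk \<omega>' n"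
  shows "s \<le> t \<Longrightarrow> ladder_epoch \<omega> k = enat s \<Longrightarrow> ladder_epoch \<omega>' k = enat s"
proof (induction k arbitrary: s)
  case 0
  then show ?case by simp
next
  case (Suc k)
  then obtain s0 where s0: "ladder_epoch \<omega> k = enat s0" "s0 < s" "walk \<omega> s < walk \<omega> s0"
    "\<forall>n. s0 < n \<and> n < s \<longrightarrow> walk \<omega> s0 \<le> walk \<omega> n"
    using le_Suc_enat by blast
  have "ladder_epoch \<omega>' k = enat s0" using Suc.IH[OF _ s0(1)] Suc.prems s0(2) by simp
  moreover have "walk \<omega>' s < walk \<omega>' s0" using s0(2,3) Suc.prems assms by simp
  moreover have "\<forall>n. s0 < n \<and> n < s \<longrightarrow> walk \<omega>' s0 \<le> walk \<omega>' n"
    using s0(2,4) Suc.prems assms by simp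
  ultimately show ?case using s0(2) le_Suc_enat by blast
qed

lemma le_local_stake:
  "stake t \<omega> = stake t \<omega>' \<Longrightarrow> s \<le> t \<Longrightarrow> ladder_epoch \<omega> k = enat s \<Longrightarrow> ladder_epoch \<omega>' k = enat s"
  by (rule le_local[of t \<omega> \<omega>']) (auto intro: walk_stake_eq)

lemma heights_sum: "(\<Sum>m\<in>{1..k}. ladder_height \<omega> m) = - walk \<omega> (the_enat (ladder_epoch \<omega> k))"
proof (induction k)
  case 0
  then show ?case by (simp add: zero_enat_def)
next
  case (Suc k)
  have "(\<Sum>m\<in>{1..Suc k}. ladder_height \<omega> m) = (\<Sum>m\<in>{1..k}. ladder_height \<omega> m) + ladder_height \<omega> (Suc k)"
    by simp
  moreover have "ladder_height \<omega> (Suc k) = walk \<omega> (the_enat (ladder_epoch \<omega> k)) - walk \<omega> (the_enat (ladder_epoch \<omega> (Suc k)))"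
    by (simp only: ladder_height_def diff_Suc_1)
  ultimately show ?case using Suc.IH by linarith
qed

lemma le_all_fin: "(\<forall>m\<in>{1..k}. ladder_epoch \<omega> m \<noteq> \<infinity>) \<longleftrightarrow> ladder_epoch \<omega> k \<noteq> \<infinity>"
proof
  assume a: "\<forall>m\<in>{1..k}. ladder_epoch \<omega> m \<noteq> \<infinity>"
  show "ladder_epoch \<omega> k \<noteq> \<infinity>"
  proof (cases "k = 0")
    case True
    then show ?thesis by (simp add: zero_enat_def)
  next
    case False
    then have "k \<in> {1..k}" by simp
    with a show ?thesis by blast
  qed
next
  assume "ladder_epoch \<omega> k \<noteq> \<infinity>"
  show "\<forall>m\<in>{1..k}. ladder_epoch \<omega> m \<noteq> \<infinity>"
  proof
    fix m assume "m \<in> {1..k}"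
    then have "m \<le> k" by simp
    then show "ladder_epoch \<omega> m \<noteq> \<infinity>"
      using le_inf_mono[of \<omega> m k] \<open>ladder_epoch \<omega> k \<noteq> \<infinity>\<close> by blast
  qed
qed

lemma local_pred_meas:
  assumes "\<And>\<omega> \<omega>'. stake n \<omega> = stake n \<omega>' \<Longrightarrow> P \<omega> \<Longrightarrow> P \<omega>'"
  shows "{\<omega>. P \<omega>} \<in> sets (iid_law p)"
  by (rule local_set_meas[of n]) (use assms in blast)

definition Ev :: "nat \<Rightarrow> int stream set" where
  "Ev i = {\<omega>. \<forall>n. - int i \<le> walk \<omega> n}"

lemma Ev_meas: "Ev i \<in> sets (iid_law p)"
proof -
  have "Ev i = (\<Inter>n\<in>UNIV. {\<omega>. - int i \<le> walk \<omega> n})" by (auto simp: Ev_def)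
  also have "\<dots> \<in> sets (iid_law p)"
  proof (rule sets.countable_INT)
    show "range (\<lambda>n. {\<omega>. - int i \<le> walk \<omega> n}) \<subseteq> sets (iid_law p)"
    proof clarify
      fix n
      show "{\<omega>. - int i \<le> walk \<omega> n} \<in> sets (iid_law p)"
        by (rule local_pred_meas[of n]) (metis walk_stake_eq order_refl)
    qed
  qed simp
  finally show ?thesis .
qed

lemma Ev_cons: "x ## \<omega> \<in> Ev i \<longleftrightarrow> (- int i \<le> x \<and> \<omega> \<in> Ev (nat (x + int i)))"
proof
  assume a: "x ## \<omega> \<in> Ev i"
  have x: "- int i \<le> x" using a walk_Cons[of x \<omega> 0] by (auto simp: Ev_def dest: spec[of _ 1])
  have H: "\<And>n. - int i \<le> x + walk \<omega> n" using a walk_Cons[of x \<omega>] unfolding Ev_def by (metis mem_Collect_eq)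
  have e: "int (nat (x + int i)) = x + int i" using x by simp
  have "\<forall>n. - int (nat (x + int i)) \<le> walk \<omega> n"
  proof
    fix n from H[of n] e show "- int (nat (x + int i)) \<le> walk \<omega> n" by linarith
  qed
  then show "- int i \<le> x \<and> \<omega> \<in> Ev (nat (x + int i))" using x by (simp add: Ev_def)
next
  assume a: "- int i \<le> x \<and> \<omega> \<in> Ev (nat (x + int i))"
  show "x ## \<omega> \<in> Ev i"
    unfolding Ev_def
  proof (clarify)
    fix n show "- int i \<le> walk (x ## \<omega>) n"
    proof (cases n)
      case (Suc m)
      then show ?thesis using a by (auto simp: Ev_def walk_Cons dest: spec[of _ m])
    qed simp
  qed
qed

lemma emeasure_Ev_step:
  "emeasure (iid_law q) (Ev i) =
   (\<integral>\<^sup>+x. (if - int i \<le> x then emeasure (iid_law q) (Ev (nat (x + int i))) else 0) \<partial>measure_pmf q)"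
proof -
  have "emeasure (iid_law q) (Ev i) = (\<integral>\<^sup>+t. emeasure (iid_law q) {x\<in>space (iid_law q). t ## x \<in> Ev i} \<partial>measure_pmf q)"
    by (rule prob_space.emeasure_stream_space[OF prob_space_measure_pmf Ev_meas])
  also have "\<dots> = (\<integral>\<^sup>+x. (if - int i \<le> x then emeasure (iid_law q) (Ev (nat (x + int i))) else 0) \<partial>measure_pmf q)"
  proof (rule nn_integral_cong)
    fix t
    have "{x\<in>space (iid_law q). t ## x \<in> Ev i} = (if - int i \<le> t then Ev (nat (t + int i)) else {})"
      by (auto simp: Ev_cons)
    then show "emeasure (iid_law q) {x\<in>space (iid_law q). t ## x \<in> Ev i} = (if - int i \<le> t then emeasure (iid_law q) (Ev (nat (t + int i))) else 0)"
      by simp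
  qed
  finally show ?thesis .
qed

lemma pmf_sum_shift:
  fixes h :: "nat \<Rightarrow> ennreal"
  shows "(\<integral>\<^sup>+x. (if - int i \<le> x then h (nat (x + int i)) else 0) \<partial>measure_pmf q)
       = (\<Sum>j. ennreal (pmf q (int j - int i)) * h j)"
proof -
  let ?F = "\<lambda>x. ennreal (pmf q x) * (if - int i \<le> x then h (nat (x + int i)) else 0)"
  let ?B = "{x::int. - int i \<le> x}"
  have "(\<integral>\<^sup>+x. (if - int i \<le> x then h (nat (x + int i)) else 0) \<partial>measure_pmf q)
      = (\<integral>\<^sup>+x. ?F x \<partial>count_space UNIV)"
    by (rule nn_integral_measure_pmf)
  also have "\<dots> = (\<integral>\<^sup>+x. ?F x * indicator ?B x \<partial>count_space UNIV)"
    by (rule nn_integral_cong) (auto simp: indicator_def)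
  also have "\<dots> = (\<integral>\<^sup>+x. ?F x \<partial>count_space ?B)"
    by (rule nn_integral_count_space_indicator[symmetric]) simp
  also have "\<dots> = (\<integral>\<^sup>+j. ?F (int j - int i) \<partial>count_space UNIV)"
  proof (rule nn_integral_bij_count_space[symmetric])
    show "bij_betw (\<lambda>j. int j - int i) UNIV ?B"
      unfolding bij_betw_def
    proof
      show "inj_on (\<lambda>j. int j - int i) UNIV" by (auto simp: inj_on_def)
      show "(\<lambda>j. int j - int i) ` UNIV = ?B"
      proof (intro set_eqI iffI)
        fix x assume "x \<in> ?B"
        then have "x = int (nat (x + int i)) - int i" by simp
        then show "x \<in> (\<lambda>j. int j - int i) ` UNIV" by blast
      qed auto
    qed
  qed
  also have "\<dots> = (\<Sum>j. ?F (int j - int i))"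
    by (rule nn_integral_count_space_nat)
  also have "\<dots> = (\<Sum>j. ennreal (pmf q (int j - int i)) * h j)"
    by simp
  finally show ?thesis .
qed

lemma harm_f_ennreal:
  "ennreal (harm_f q \<beta> i) = ennreal (exp (\<beta> * real i)) * emeasure (iid_law q) (Ev i)"
proof -
  interpret Q: prob_space "iid_law q" by (rule prob_iid)
  show ?thesis unfolding harm_f_def Ev_def
    by (simp add: Q.emeasure_eq_measure ennreal_mult)
qed

lemma harm_f_nonneg: "0 \<le> harm_f q \<beta> i"
  by (simp add: harm_f_def)

lemma harmonic:
  assumes tilt: "\<And>j. pmf q j = exp (\<beta> * real_of_int j) * pmf p j"
  shows "(\<lambda>j::nat. pmf p (int j - int i) * harm_f q \<beta> j) sums harm_f q \<beta> i"
proof -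
  have "ennreal (harm_f q \<beta> i) = ennreal (exp (\<beta> * real i)) *
     (\<Sum>j. ennreal (pmf q (int j - int i)) * emeasure (iid_law q) (Ev j))"
    by (simp add: harm_f_ennreal emeasure_Ev_step[of q i] pmf_sum_shift[where h="\<lambda>j. emeasure (iid_law q) (Ev j)"])
  also have "\<dots> = (\<Sum>j. ennreal (pmf p (int j - int i) * harm_f q \<beta> j))"
  proof -
    have "\<And>j. ennreal (exp (\<beta> * real i)) * (ennreal (pmf q (int j - int i)) * emeasure (iid_law q) (Ev j))
          = ennreal (pmf p (int j - int i) * harm_f q \<beta> j)"
    proof -
      fix j
      let ?E = "emeasure (iid_law q) (Ev j)"
      have r: "exp (\<beta> * real i) * pmf q (int j - int i) = pmf p (int j - int i) * exp (\<beta> * real j)"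
        by (simp add: tilt mult_ac flip: exp_add) (simp add: algebra_simps)
      have "ennreal (exp (\<beta> * real i)) * (ennreal (pmf q (int j - int i)) * ?E)
          = ennreal (exp (\<beta> * real i) * pmf q (int j - int i)) * ?E"
        by (simp add: ennreal_mult mult.assoc)
      also have "\<dots> = ennreal (pmf p (int j - int i) * exp (\<beta> * real j)) * ?E" by (simp only: r)
      also have "\<dots> = ennreal (pmf p (int j - int i)) * (ennreal (exp (\<beta> * real j)) * ?E)"
        by (simp add: ennreal_mult mult.assoc)
      also have "\<dots> = ennreal (pmf p (int j - int i) * harm_f q \<beta> j)"
        by (simp add: harm_f_ennreal ennreal_mult harm_f_nonneg)
      finally show "ennreal (exp (\<beta> * real i)) * (ennreal (pmf q (int j - int i)) * emeasure (iid_law q) (Ev j))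
          = ennreal (pmf p (int j - int i) * harm_f q \<beta> j)" .
    qed
    then show ?thesis by (simp flip: ennreal_suminf_cmult)
  qed
  finally have eq: "ennreal (harm_f q \<beta> i) = (\<Sum>j. ennreal (pmf p (int j - int i) * harm_f q \<beta> j))" .
  have "(\<lambda>j. ennreal (pmf p (int j - int i) * harm_f q \<beta> j)) sums ennreal (harm_f q \<beta> i)"
    unfolding eq by (rule summable_sums[OF summableI])
  then show ?thesis
    by (subst (asm) sums_ennreal) (auto simp: harm_f_nonneg)
qed

definition Fh :: "nat \<Rightarrow> nat \<Rightarrow> int stream set" where
  "Fh i t = {\<omega>. walk \<omega> t < - int i \<and> (\<forall>m<t. - int i \<le> walk \<omega> m)}"

lemma Fh_local: "stake t \<omega> = stake t \<omega>' \<Longrightarrow> \<omega> \<in> Fh i t \<Longrightarrow> \<omega>' \<in> Fh i t"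
  unfolding Fh_def using walk_stake_eq[of t \<omega> \<omega>'] by auto

lemma Fh_meas: "Fh i t \<in> sets (iid_law p)"
  by (rule local_set_meas[of t]) (rule Fh_local)

lemma Fh_disj: "disjoint_family (Fh i)"
  unfolding disjoint_family_on_def Fh_def
  by (auto simp: not_less) (metis linorder_neqE_nat not_less)

lemma Fh_Un: "UNIV - Ev i = (\<Union>t. Fh i t)"
proof (intro set_eqI iffI)
  fix \<omega> assume "\<omega> \<in> UNIV - Ev i"
  then have ex: "\<exists>n. walk \<omega> n < - int i" by (auto simp: Ev_def not_le)
  let ?t = "LEAST n. walk \<omega> n < - int i"
  have "walk \<omega> ?t < - int i" using LeastI_ex[OF ex] .
  moreover have "\<forall>m<?t. - int i \<le> walk \<omega> m" using not_less_Least[of _ "\<lambda>n. walk \<omega> n < - int i"] by (auto simp: not_less)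
  ultimately show "\<omega> \<in> (\<Union>t. Fh i t)" by (auto simp: Fh_def)
next
  fix \<omega> assume "\<omega> \<in> (\<Union>t. Fh i t)"
  then show "\<omega> \<in> UNIV - Ev i" by (auto simp: Fh_def Ev_def not_le)
qed

lemma Fh_tilt:
  assumes tilt: "\<And>j. pmf q j = exp (\<beta> * real_of_int j) * pmf p j" and b: "0 \<le> \<beta>"
  shows "emeasure (iid_law q) (Fh i t) \<le> ennreal (exp (- \<beta> * (real i + 1))) * emeasure (iid_law p) (Fh i t)"
proof -
  let ?S = "stake t ` Fh i t"
  have ind: "\<And>\<omega>. indicator (Fh i t) \<omega> = indicator ?S (stake t \<omega>)"
    by (rule local_set) (rule Fh_local)
  have "emeasure (iid_law q) (Fh i t) = (\<integral>\<^sup>+\<omega>. indicator ?S (stake t \<omega>) \<partial>iid_law q)"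
    by (simp add: ind[symmetric] Fh_meas)
  also have "\<dots> = (\<integral>\<^sup>+\<omega>. ennreal (exp (\<beta> * real_of_int (sum_list (stake t \<omega>)))) * indicator ?S (stake t \<omega>) \<partial>iid_law p)"
    by (rule tilt_int[OF tilt])
  also have "\<dots> \<le> (\<integral>\<^sup>+\<omega>. ennreal (exp (- \<beta> * (real i + 1))) * indicator (Fh i t) \<omega> \<partial>iid_law p)"
  proof (rule nn_integral_mono)
    fix \<omega>
    show "ennreal (exp (\<beta> * real_of_int (sum_list (stake t \<omega>)))) * indicator ?S (stake t \<omega>)
          \<le> ennreal (exp (- \<beta> * (real i + 1))) * indicator (Fh i t) \<omega>"
    proof (cases "\<omega> \<in> Fh i t")
      case True
      then have "walk \<omega> t \<le> - int i - 1" by (simp add: Fh_def)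
      then have "real_of_int (walk \<omega> t) \<le> - (real i + 1)" by linarith
      then have "\<beta> * real_of_int (walk \<omega> t) \<le> \<beta> * (- (real i + 1))"
        using b by (rule mult_left_mono)
      then have "exp (\<beta> * real_of_int (walk \<omega> t)) \<le> exp (- \<beta> * (real i + 1))" by (simp add: algebra_simps)
      then show ?thesis using True by (simp add: ind[symmetric] walk_def[symmetric])
    next
      case False
      then show ?thesis by (simp add: ind[symmetric])
    qed
  qed
  also have "\<dots> = ennreal (exp (- \<beta> * (real i + 1))) * emeasure (iid_law p) (Fh i t)"
    by (rule nn_integral_cmult_indicator[OF Fh_meas])
  finally show ?thesis .
qed

lemma bounds:
  assumes tilt: "\<And>j. pmf q j = exp (\<beta> * real_of_int j) * pmf p j" and b: "0 \<le> \<beta>"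
  shows "exp (\<beta> * real i) - exp (- \<beta>) \<le> harm_f q \<beta> i \<and> harm_f q \<beta> i \<le> exp (\<beta> * real i)"
proof -
  interpret Q: prob_space "iid_law q" by (rule prob_iid)
  interpret P: prob_space "iid_law p" by (rule prob_iid)
  let ?c = "exp (- \<beta> * (real i + 1))"
  have "emeasure (iid_law q) (UNIV - Ev i) = (\<Sum>t. emeasure (iid_law q) (Fh i t))"
    unfolding Fh_Un by (rule suminf_emeasure[symmetric]) (auto simp: Fh_meas Fh_disj)
  also have "\<dots> \<le> (\<Sum>t. ennreal ?c * emeasure (iid_law p) (Fh i t))"
    by (rule suminf_le) (use Fh_tilt[OF tilt b] in auto)
  also have "\<dots> = ennreal ?c * emeasure (iid_law p) (\<Union>t. Fh i t)"
    by (simp add: suminf_emeasure Fh_meas Fh_disj image_subset_iff)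
  also have "\<dots> \<le> ennreal ?c * 1"
    by (rule mult_left_mono) (auto simp: P.emeasure_le_1)
  finally have "emeasure (iid_law q) (UNIV - Ev i) \<le> ennreal ?c" by simp
  then have m1: "measure (iid_law q) (UNIV - Ev i) \<le> ?c"
    by (simp add: Q.emeasure_eq_measure)
  have "measure (iid_law q) (UNIV - Ev i) = 1 - measure (iid_law q) (Ev i)"
    using Q.prob_compl[of "Ev i"] Ev_meas by simp
  with m1 have lo: "1 - ?c \<le> measure (iid_law q) (Ev i)" by linarith
  have hi: "measure (iid_law q) (Ev i) \<le> 1" by simp
  have hf: "harm_f q \<beta> i = exp (\<beta> * real i) * measure (iid_law q) (Ev i)"
    by (simp add: harm_f_def Ev_def)
  have "exp (\<beta> * real i) * ?c = exp (- \<beta>)"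
    by (simp flip: exp_add) (simp add: algebra_simps)
  then have "exp (\<beta> * real i) - exp (- \<beta>) = exp (\<beta> * real i) * (1 - ?c)"
    by (simp add: algebra_simps)
  also have "\<dots> \<le> exp (\<beta> * real i) * measure (iid_law q) (Ev i)"
    using lo by (intro mult_left_mono) auto
  finally have "exp (\<beta> * real i) - exp (- \<beta>) \<le> harm_f q \<beta> i" by (simp add: hf)
  moreover have "harm_f q \<beta> i \<le> exp (\<beta> * real i)"
    unfolding hf using hi by (intro mult_left_le) auto
  ultimately show ?thesis by simp
qed

declare ladder_epoch.simps(2)[simp del]

lemma le_loc: "stake t \<omega> = stake t \<omega>' \<Longrightarrow> ladder_epoch \<omega> k = enat t \<Longrightarrow> ladder_epoch \<omega>' k = enat t"
  by (rule le_local_stake) auto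

definition Cl :: "nat \<Rightarrow> nat \<Rightarrow> nat \<Rightarrow> int stream set" where
  "Cl k t l = {\<omega>. ladder_epoch \<omega> k = enat t \<and> walk \<omega> t = - int l}"

definition Ci :: "nat \<Rightarrow> nat \<Rightarrow> nat \<Rightarrow> int stream set" where
  "Ci i k t = {\<omega>. ladder_epoch \<omega> k = enat t \<and> - int i \<le> walk \<omega> t}"

definition Bs :: "nat \<Rightarrow> nat \<Rightarrow> nat \<Rightarrow> int stream set" where
  "Bs i k t = {\<omega>. ladder_epoch \<omega> k = enat t \<and> - int i \<le> walk \<omega> t \<and> ladder_epoch \<omega> (Suc k) = \<infinity>}"

definition Dset :: "int stream set" where
  "Dset = {\<omega>. \<forall>n>0. 0 \<le> walk \<omega> n}"

lemma Cl_local: "stake t \<omega> = stake t \<omega>' \<Longrightarrow> \<omega> \<in> Cl k t l \<Longrightarrow> \<omega>' \<in> Cl k t l"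
  unfolding Cl_def using le_loc[of t \<omega> \<omega>' k] walk_stake_eq[of t \<omega> \<omega>' t] by auto

lemma Ci_local: "stake t \<omega> = stake t \<omega>' \<Longrightarrow> \<omega> \<in> Ci i k t \<Longrightarrow> \<omega>' \<in> Ci i k t"
  unfolding Ci_def using le_loc[of t \<omega> \<omega>' k] walk_stake_eq[of t \<omega> \<omega>' t] by auto

lemma Cl_meas: "Cl k t l \<in> sets (iid_law p)"
  by (rule local_set_meas[of t]) (rule Cl_local)

lemma Ci_meas: "Ci i k t \<in> sets (iid_law p)"
  by (rule local_set_meas[of t]) (rule Ci_local)

lemma Dset_meas: "Dset \<in> sets (iid_law p)"
proof -
  have "Dset = (\<Inter>n\<in>UNIV. {\<omega>. 0 < n \<longrightarrow> 0 \<le> walk \<omega> n})" by (auto simp: Dset_def)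
  also have "\<dots> \<in> sets (iid_law p)"
  proof (rule sets.countable_INT)
    show "range (\<lambda>n. {\<omega>. 0 < n \<longrightarrow> 0 \<le> walk \<omega> n}) \<subseteq> sets (iid_law p)"
    proof clarify
      fix n
      show "{\<omega>. 0 < n \<longrightarrow> 0 \<le> walk \<omega> n} \<in> sets (iid_law p)"
        by (rule local_pred_meas[of n]) (metis walk_stake_eq order_refl)
    qed
  qed simp
  finally show ?thesis .
qed

lemma Dset_eq: "{\<omega>. ladder_epoch \<omega> 1 = \<infinity>} = Dset"
proof -
  have "\<And>\<omega>. ladder_epoch \<omega> (Suc 0) = \<infinity> \<longleftrightarrow> (\<forall>n>0. walk \<omega> 0 \<le> walk \<omega> n)"
    by (rule le_inf_Suc) (simp add: zero_enat_def)
  then show ?thesis by (simp add: Dset_def)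
qed

lemma shift_D:
  assumes "ladder_epoch \<omega> k = enat t"
  shows "ladder_epoch \<omega> (Suc k) = \<infinity> \<longleftrightarrow> sdrop t \<omega> \<in> Dset"
proof -
  have "(\<forall>n>t. walk \<omega> t \<le> walk \<omega> n) \<longleftrightarrow> (\<forall>m>0. 0 \<le> walk (sdrop t \<omega>) m)"
  proof
    assume a: "\<forall>n>t. walk \<omega> t \<le> walk \<omega> n"
    show "\<forall>m>0. 0 \<le> walk (sdrop t \<omega>) m"
    proof clarify
      fix m :: nat assume "0 < m"
      then have "walk \<omega> t \<le> walk \<omega> (t + m)" using a by simp
      then show "0 \<le> walk (sdrop t \<omega>) m" by (simp add: walk_shift)
    qed
  next
    assume a: "\<forall>m>0. 0 \<le> walk (sdrop t \<omega>) m"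
    show "\<forall>n>t. walk \<omega> t \<le> walk \<omega> n"
    proof clarify
      fix n assume "t < n"
      then have n: "n = t + (n - t)" "0 < n - t" by auto
      have "0 \<le> walk (sdrop t \<omega>) (n - t)" using a n(2) by simp
      then show "walk \<omega> t \<le> walk \<omega> n" by (subst n(1)) (simp add: walk_shift)
    qed
  qed
  then show ?thesis using le_inf_Suc[OF assms] by (simp add: Dset_def)
qed

lemma Bs_eq: "Bs i k t = Ci i k t \<inter> (sdrop t -` Dset \<inter> space (iid_law p))"
  unfolding Bs_def Ci_def using shift_D by auto

lemma Bs_meas: "Bs i k t \<in> sets (iid_law p)"
  unfolding Bs_eq[where p=p]
  by (intro sets.Int Ci_meas measurable_sets[OF measurable_sdrop Dset_meas])

definition Ek :: "nat \<Rightarrow> nat \<Rightarrow> int stream set" where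
  "Ek i k = (\<Union>t. Bs i k t)"

lemma Ek_meas: "Ek i k \<in> sets (iid_law p)"
  unfolding Ek_def by (intro sets.countable_UN) (auto simp: Bs_meas)

lemma Bs_disj: "disjoint_family (Bs i k)"
  unfolding disjoint_family_on_def Bs_def by auto

lemma Ek_disj_aux: "k < k' \<Longrightarrow> \<omega> \<in> Ek i k \<Longrightarrow> \<omega> \<in> Ek i k' \<Longrightarrow> False"
proof -
  assume "k < k'" "\<omega> \<in> Ek i k" "\<omega> \<in> Ek i k'"
  then obtain t t' where "ladder_epoch \<omega> (Suc k) = \<infinity>" "ladder_epoch \<omega> k' = enat t'"
    by (auto simp: Ek_def Bs_def)
  with le_inf_mono[of \<omega> "Suc k" k'] \<open>k < k'\<close> show False by simp
qed

lemma Ek_disj: "disjoint_family (Ek i)"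
  unfolding disjoint_family_on_def
proof (intro ballI impI)
  fix k k' :: nat assume ne: "k \<noteq> k'"
  show "Ek i k \<inter> Ek i k' = {}"
    using Ek_disj_aux[of k k' _ i] Ek_disj_aux[of k' k _ i] ne by (metis disjoint_iff linorder_neqE_nat)
qed

lemma Ev_decomp: "Ev i = (\<Union>k. Ek i k)"
proof (intro set_eqI iffI)
  fix \<omega> assume ev: "\<omega> \<in> Ev i"
  have ex: "\<exists>k. ladder_epoch \<omega> (Suc k) = \<infinity>"
  proof (rule ccontr)
    assume na: "\<not> ?thesis"
    have "ladder_epoch \<omega> (Suc i) \<noteq> \<infinity>" using na by simp
    then obtain t where "ladder_epoch \<omega> (Suc i) = enat t" by (cases "ladder_epoch \<omega> (Suc i)") auto
    then have "walk \<omega> t \<le> - int (Suc i)" by (rule le_walk_le)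
    with ev show False by (auto simp: Ev_def dest: spec[of _ t])
  qed
  let ?K = "LEAST k. ladder_epoch \<omega> (Suc k) = \<infinity>"
  have K: "ladder_epoch \<omega> (Suc ?K) = \<infinity>" using LeastI_ex[OF ex] .
  have "ladder_epoch \<omega> ?K \<noteq> \<infinity>"
  proof (cases ?K)
    case 0
    then show ?thesis by (simp add: zero_enat_def)
  next
    case (Suc K')
    then have "K' < ?K" by simp
    then have "ladder_epoch \<omega> (Suc K') \<noteq> \<infinity>" by (rule not_less_Least)
    then show ?thesis using Suc by simp
  qed
  then obtain t where t: "ladder_epoch \<omega> ?K = enat t" by (cases "ladder_epoch \<omega> ?K") auto
  have "- int i \<le> walk \<omega> t" using ev by (simp add: Ev_def)
  with t K have "\<omega> \<in> Bs i ?K t" by (simp add: Bs_def)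
  then show "\<omega> \<in> (\<Union>k. Ek i k)" by (auto simp: Ek_def)
next
  fix \<omega> assume "\<omega> \<in> (\<Union>k. Ek i k)"
  then obtain k t where b: "\<omega> \<in> Bs i k t" by (auto simp: Ek_def)
  then have t: "ladder_epoch \<omega> k = enat t" "- int i \<le> walk \<omega> t" "ladder_epoch \<omega> (Suc k) = \<infinity>"
    by (auto simp: Bs_def)
  have "\<forall>n. - int i \<le> walk \<omega> n"
  proof
    fix n
    show "- int i \<le> walk \<omega> n"
    proof (cases "n \<le> t")
      case True
      then show ?thesis using le_min[OF t(1) True] t(2) by simp
    next
      case False
      have "\<forall>n>t. walk \<omega> t \<le> walk \<omega> n" using t(3) le_inf_Suc[OF t(1)] by simp
      then have "walk \<omega> t \<le> walk \<omega> n" using False by simp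
      then show ?thesis using t(2) by simp
    qed
  qed
  then show "\<omega> \<in> Ev i" by (simp add: Ev_def)
qed

lemma Bs_prod: "emeasure (iid_law q) (Bs i k t) = emeasure (iid_law q) (Ci i k t) * emeasure (iid_law q) Dset"
proof -
  let ?S = "stake t ` Ci i k t"
  have indC: "\<And>\<omega>. indicator (Ci i k t) \<omega> = indicator ?S (stake t \<omega>)"
    by (rule local_set) (rule Ci_local)
  have indB: "\<And>\<omega>. indicator (Bs i k t) \<omega> = indicator ?S (stake t \<omega>) * (indicator Dset (sdrop t \<omega>) :: ennreal)"
  proof -
    fix \<omega>
    have "indicator (Bs i k t) \<omega> = indicator (Ci i k t) \<omega> * (indicator Dset (sdrop t \<omega>) :: ennreal)"
      by (simp add: Bs_eq[where p=q] indicator_def)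
    then show "indicator (Bs i k t) \<omega> = indicator ?S (stake t \<omega>) * (indicator Dset (sdrop t \<omega>) :: ennreal)"
      by (simp only: indC)
  qed
  have "emeasure (iid_law q) (Bs i k t) = (\<integral>\<^sup>+\<omega>. indicator ?S (stake t \<omega>) * indicator Dset (sdrop t \<omega>) \<partial>iid_law q)"
    by (simp add: indB[symmetric] Bs_meas)
  also have "\<dots> = (\<integral>\<^sup>+\<omega>. indicator ?S (stake t \<omega>) \<partial>iid_law q) * (\<integral>\<^sup>+\<omega>. indicator Dset \<omega> \<partial>iid_law q)"
    by (rule indep_int) (rule borel_measurable_indicator[OF Dset_meas])
  also have "\<dots> = emeasure (iid_law q) (Ci i k t) * emeasure (iid_law q) Dset"
    by (simp add: indC[symmetric] Ci_meas Dset_meas)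
  finally show ?thesis .
qed

lemma Ci_pointwise:
  "ennreal (exp (\<beta> * real_of_int (walk \<omega> t))) * indicator (Ci i k t) \<omega>
   = (\<Sum>l\<in>{0..i}. ennreal (exp (- \<beta> * real l)) * indicator (Cl k t l) \<omega>)"
proof (cases "\<omega> \<in> Ci i k t")
  case True
  then have t: "ladder_epoch \<omega> k = enat t" and w: "- int i \<le> walk \<omega> t" by (auto simp: Ci_def)
  have w0: "walk \<omega> t \<le> 0" using le_walk_le[OF t] by simp
  define L where "L = nat (- walk \<omega> t)"
  have L: "walk \<omega> t = - int L" "L \<in> {0..i}" using w w0 by (auto simp: L_def)
  have "(\<Sum>l\<in>{0..i}. ennreal (exp (- \<beta> * real l)) * indicator (Cl k t l) \<omega>)
      = (\<Sum>l\<in>{0..i}. if l = L then ennreal (exp (- \<beta> * real l)) else 0)"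
    by (rule sum.cong) (auto simp: Cl_def t L(1) indicator_def)
  also have "\<dots> = ennreal (exp (- \<beta> * real L))"
    using L(2) by (simp add: sum.delta)
  also have "\<dots> = ennreal (exp (\<beta> * real_of_int (walk \<omega> t))) * indicator (Ci i k t) \<omega>"
    using True by (simp add: L(1))
  finally show ?thesis ..
next
  case False
  have "\<And>l. l \<in> {0..i} \<Longrightarrow> \<omega> \<notin> Cl k t l"
    using False by (auto simp: Cl_def Ci_def)
  then show ?thesis using False by simp
qed

lemma Ci_tilt:
  assumes tilt: "\<And>j. pmf q j = exp (\<beta> * real_of_int j) * pmf p j"
  shows "emeasure (iid_law q) (Ci i k t) = (\<Sum>l\<in>{0..i}. ennreal (exp (- \<beta> * real l)) * emeasure (iid_law p) (Cl k t l))"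
proof -
  let ?S = "stake t ` Ci i k t"
  have ind: "\<And>\<omega>. indicator (Ci i k t) \<omega> = indicator ?S (stake t \<omega>)"
    by (rule local_set) (rule Ci_local)
  have "emeasure (iid_law q) (Ci i k t) = (\<integral>\<^sup>+\<omega>. indicator ?S (stake t \<omega>) \<partial>iid_law q)"
    by (simp add: ind[symmetric] Ci_meas)
  also have "\<dots> = (\<integral>\<^sup>+\<omega>. ennreal (exp (\<beta> * real_of_int (sum_list (stake t \<omega>)))) * indicator ?S (stake t \<omega>) \<partial>iid_law p)"
    by (rule tilt_int[OF tilt])
  also have "\<dots> = (\<integral>\<^sup>+\<omega>. (\<Sum>l\<in>{0..i}. ennreal (exp (- \<beta> * real l)) * indicator (Cl k t l) \<omega>) \<partial>iid_law p)"
    by (rule nn_integral_cong) (simp add: ind[symmetric] walk_def[symmetric] Ci_pointwise)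
  also have "\<dots> = (\<Sum>l\<in>{0..i}. (\<integral>\<^sup>+\<omega>. ennreal (exp (- \<beta> * real l)) * indicator (Cl k t l) \<omega> \<partial>iid_law p))"
    by (rule nn_integral_sum) (intro borel_measurable_times_ennreal borel_measurable_const borel_measurable_indicator Cl_meas)
  also have "\<dots> = (\<Sum>l\<in>{0..i}. ennreal (exp (- \<beta> * real l)) * emeasure (iid_law p) (Cl k t l))"
    by (rule sum.cong) (simp_all add: nn_integral_cmult_indicator Cl_meas)
  finally show ?thesis .
qed

lemma renewal_eq: "renewal_u p l = (\<Sum>k. \<Sum>t. emeasure (iid_law p) (Cl k t l))"
proof -
  have "\<And>k. {\<omega>. (\<forall>m\<in>{1..k}. ladder_epoch \<omega> m \<noteq> \<infinity>) \<and> (\<Sum>m\<in>{1..k}. ladder_height \<omega> m) = int l}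
          = (\<Union>t. Cl k t l)"
  proof (intro set_eqI iffI)
    fix k \<omega>
    assume "\<omega> \<in> {\<omega>. (\<forall>m\<in>{1..k}. ladder_epoch \<omega> m \<noteq> \<infinity>) \<and> (\<Sum>m\<in>{1..k}. ladder_height \<omega> m) = int l}"
    then have a: "ladder_epoch \<omega> k \<noteq> \<infinity> \<and> - walk \<omega> (the_enat (ladder_epoch \<omega> k)) = int l"
      by (simp only: mem_Collect_eq le_all_fin heights_sum simp_thms)
    then obtain t where t: "ladder_epoch \<omega> k = enat t" by (cases "ladder_epoch \<omega> k") auto
    with a show "\<omega> \<in> (\<Union>t. Cl k t l)" by (auto simp: Cl_def)
  next
    fix k \<omega>
    assume "\<omega> \<in> (\<Union>t. Cl k t l)"
    then obtain t where t: "ladder_epoch \<omega> k = enat t" "walk \<omega> t = - int l" by (auto simp: Cl_def)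
    then show "\<omega> \<in> {\<omega>. (\<forall>m\<in>{1..k}. ladder_epoch \<omega> m \<noteq> \<infinity>) \<and> (\<Sum>m\<in>{1..k}. ladder_height \<omega> m) = int l}"
      by (simp only: mem_Collect_eq le_all_fin heights_sum) simp
  qed
  moreover have "\<And>k. emeasure (iid_law p) (\<Union>t. Cl k t l) = (\<Sum>t. emeasure (iid_law p) (Cl k t l))"
    by (rule suminf_emeasure[symmetric]) (auto simp: disjoint_family_on_def Cl_def intro: Cl_meas[unfolded Cl_def])
  ultimately show ?thesis unfolding renewal_u_def by simp
qed

lemma renewal_part:
  assumes tilt: "\<And>j. pmf q j = exp (\<beta> * real_of_int j) * pmf p j"
  shows "ennreal (harm_f q \<beta> i) =
            emeasure (iid_law q) {\<omega>. ladder_epoch \<omega> 1 = \<infinity>}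
            * (\<Sum>j\<in>{0..i}. ennreal (exp (\<beta> * (real i - real j))) * renewal_u p j)"
proof -
  let ?D = "emeasure (iid_law q) Dset"
  let ?c = "\<lambda>l. ennreal (exp (- \<beta> * real l))"
  let ?P = "\<lambda>k t l. emeasure (iid_law p) (Cl k t l)"
  have "emeasure (iid_law q) (Ev i) = (\<Sum>k. emeasure (iid_law q) (Ek i k))"
    unfolding Ev_decomp by (rule suminf_emeasure[symmetric]) (auto simp: Ek_meas Ek_disj)
  also have "\<dots> = (\<Sum>k. \<Sum>t. emeasure (iid_law q) (Bs i k t))"
    unfolding Ek_def by (intro suminf_cong suminf_emeasure[symmetric]) (auto simp: Bs_meas Bs_disj)
  also have "\<dots> = (\<Sum>k. \<Sum>t. (\<Sum>l\<in>{0..i}. ?c l * ?P k t l) * ?D)"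
    by (simp add: Bs_prod Ci_tilt[OF tilt])
  also have "\<dots> = (\<Sum>k. \<Sum>t. \<Sum>l\<in>{0..i}. ?c l * ?P k t l) * ?D"
    by simp
  also have "(\<Sum>k. \<Sum>t. \<Sum>l\<in>{0..i}. ?c l * ?P k t l) = (\<Sum>l\<in>{0..i}. ?c l * renewal_u p l)"
  proof -
    have "(\<Sum>k. \<Sum>t. \<Sum>l\<in>{0..i}. ?c l * ?P k t l) = (\<Sum>k. \<Sum>l\<in>{0..i}. ?c l * (\<Sum>t. ?P k t l))"
      by (rule suminf_cong) (simp add: suminf_sum[OF summableI])
    also have "\<dots> = (\<Sum>l\<in>{0..i}. ?c l * (\<Sum>k. \<Sum>t. ?P k t l))"
      by (simp add: suminf_sum[OF summableI])
    also have "\<dots> = (\<Sum>l\<in>{0..i}. ?c l * renewal_u p l)"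
      by (simp add: renewal_eq)
    finally show ?thesis .
  qed
  finally have ev: "emeasure (iid_law q) (Ev i) = (\<Sum>l\<in>{0..i}. ?c l * renewal_u p l) * ?D" .
  have "ennreal (harm_f q \<beta> i) = ennreal (exp (\<beta> * real i)) * ((\<Sum>l\<in>{0..i}. ?c l * renewal_u p l) * ?D)"
    by (simp add: harm_f_ennreal ev)
  also have "\<dots> = ?D * (\<Sum>l\<in>{0..i}. ennreal (exp (\<beta> * real i)) * ?c l * renewal_u p l)"
    by (simp add: sum_distrib_left mult_ac)
  also have "\<dots> = ?D * (\<Sum>j\<in>{0..i}. ennreal (exp (\<beta> * (real i - real j))) * renewal_u p j)"
  proof -
    have "\<And>j. ennreal (exp (\<beta> * real i)) * ?c j = ennreal (exp (\<beta> * (real i - real j)))"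
      by (simp add: ennreal_mult[symmetric] flip: exp_add) (simp add: algebra_simps)
    then show ?thesis by simp
  qed
  finally show ?thesis by (simp only: Dset_eq)
qed


theorem mainTheorem9:
  fixes p q :: "int pmf" and \<beta> :: real
  assumes neg_mean: "(\<integral>\<^sup>+ x. ennreal (real_of_int x) \<partial>measure_pmf p)
                     < (\<integral>\<^sup>+ x. ennreal (- real_of_int x) \<partial>measure_pmf p)"
    and beta_pos: "\<beta> > 0"
    and cramer: "(\<integral>\<^sup>+ x. ennreal (exp (\<beta> * real_of_int x)) \<partial>measure_pmf p) = 1"
    and tilt: "\<And>j. pmf q j = exp (\<beta> * real_of_int j) * pmf p j"
  shows "(\<forall>i::nat. (\<lambda>j::nat. pmf p (int j - int i) * harm_f q \<beta> j) sums harm_f q \<beta> i)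
       \<and> (\<forall>i::nat. exp (\<beta> * real i) - exp (- \<beta>) \<le> harm_f q \<beta> i
                   \<and> harm_f q \<beta> i \<le> exp (\<beta> * real i))
       \<and> (\<forall>i::nat. ennreal (harm_f q \<beta> i) =
            emeasure (iid_law q) {\<omega>. ladder_epoch \<omega> 1 = \<infinity>}
            * (\<Sum>j\<in>{0..i}. ennreal (exp (\<beta> * (real i - real j))) * renewal_u p j))"
proof -
  have b: "0 \<le> \<beta>" using beta_pos by simp
  show ?thesis using harmonic[OF tilt] bounds[OF tilt b] renewal_part[OF tilt] by blast
qed

end
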